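(* For an integer $n>1$ define, for every integer $1<r<n$, $$E^{BW,P}_n(r)=\frac{2r(r-1)}{n^2}\sum_{k=r+1}^{n}\frac{n+k}{(k-1)(k-2)},$$ and let $\mathcal{M}(n)$ be a value of $r$ at which $E^{BW,P}_n$ attains its maximum. Let $$\vartheta=\frac{1}{2W\!\left(\frac{e^{3/2}}{2}\right)}=0.552001\dots,$$ the solution of $1-3x-2x\log x=0$. Then (i) $\lim_{n\to\infty}\mathcal{M}(n)/n=\vartheta$; (ii) $\lim_{n\to\infty}E^{BW,P}_n(\mathcal{M}(n))=\lim_{n\to\infty}E^{BW,P}_n(\lfloor n\vartheta\rfloor)=\vartheta(1+\vartheta)=0.8567\dots$.
   Context: $W$ denotes the principal (main) branch of the Lambert $W$ function, i.e. the inverse of $z\mapsto ze^z$ on $[-1,\infty)$. *)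

theory Defs
  imports Complex_Main
begin

definition lambertW :: "real \<Rightarrow> real" where
  "lambertW y = (THE w. w \<ge> -1 \<and> w * exp w = y)"

definition EBWP :: "nat \<Rightarrow> nat \<Rightarrow> real" where
  "EBWP n r = 2 * real r * (real r - 1) / (real n)^2 *
     (\<Sum>k = r+1..n. (real n + real k) / ((real k - 1) * (real k - 2)))"

definition vartheta :: real where
  "vartheta = 1 / (2 * lambertW (exp (3/2) / 2))"

end

theory Submission
  imports Defs
begin


lemma lw_facts: "lambertW (exp (3/2)/2) > 1/2 \<and> lambertW (exp (3/2)/2) * exp (lambertW (exp (3/2)/2)) = exp (3/2)/2"
proof -
  define y where "y = exp (3/2::real)/2"
  have e: "exp (1/2::real) < exp (3/2)" by simp
  have y0: "y > 0" unfolding y_def by simp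
  have "(\<lambda>w. w * exp w) (1/2) \<le> y" using e unfolding y_def by simp
  moreover have "y \<le> (\<lambda>w. w * exp w) (3/2)" unfolding y_def by simp
  ultimately obtain w :: real where w: "1/2 \<le> w" "w \<le> 3/2" "w * exp w = y"
    using IVT[of "\<lambda>w. w * exp w" "1/2" y "3/2"] by (auto intro!: continuous_intros)
  have "w \<noteq> 1/2"
  proof
    assume "w = 1/2"
    then have "exp (1/2::real) = exp (3/2)" using w(3) unfolding y_def \<open>w = 1/2\<close> by simp
    with e show False by simp
  qed
  with w have w1: "w > 1/2" by simp
  have mono: "a * exp a < b * exp b" if "0 < a" "a < b" for a b :: real
    using that by (intro mult_strict_mono) auto
  have uniq: "v = w" if "v \<ge> -1" "v * exp v = y" for v
  proof -
    have "v > 0"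
    proof (rule ccontr)
      assume "\<not> v > 0"
      then have "v * exp v \<le> 0" by (simp add: mult_nonpos_nonneg)
      with that y0 show False by simp
    qed
    show ?thesis
    proof (rule ccontr)
      assume "v \<noteq> w"
      then consider "v < w" | "w < v" by linarith
      then show False
        using mono[of v w] mono[of w v] \<open>v > 0\<close> w1 w(3) that(2) by (cases) auto
    qed
  qed
  have "lambertW y = w" unfolding lambertW_def
    by (rule the_equality) (use w uniq in auto)
  then show ?thesis using w w1 unfolding y_def by simp
qed

lemma theta_facts: "0 < vartheta \<and> vartheta < 1 \<and> 1 - 3 * vartheta - 2 * vartheta * ln vartheta = 0"
proof -
  define w where "w = lambertW (exp (3/2)/2)"
  have w: "w > 1/2" "w * exp w = exp (3/2) / 2" using lw_facts unfolding w_def by auto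
  have th: "vartheta = 1/(2*w)" unfolding vartheta_def w_def by simp
  have "ln (w * exp w) = ln (exp (3/2) / 2)" using w by simp
  moreover have "ln (w * exp w) = ln w + w" using w by (simp add: ln_mult)
  moreover have "ln (exp (3/2) / 2) = 3/2 - ln (2::real)" by (simp add: ln_div)
  ultimately have "ln w + w = 3/2 - ln 2" by simp
  moreover have "ln vartheta = - (ln 2 + ln w)" using w unfolding th by (simp add: ln_div ln_mult)
  ultimately have "ln vartheta = w - 3/2" by simp
  then have hw: "w = ln vartheta + 3/2" by simp
  have "1 - 3 * vartheta - 2 * vartheta * ln vartheta = 1 - 2*vartheta*w" unfolding hw by (simp add: algebra_simps)
  moreover have "2*vartheta*w = 1" unfolding th using w by simp
  moreover have "0 < vartheta" "vartheta < 1" unfolding th using w by (auto simp: field_simps)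
  ultimately show ?thesis by simp
qed




definition F :: "real \<Rightarrow> real" where "F x = 2*x*(1-x) - 2*x^2*ln x"

lemma h_mono: "0 < (x::real) \<Longrightarrow> x < y \<Longrightarrow> 1/y - 3 - 2*ln y < 1/x - 3 - 2 * ln x"
proof -
  assume a: "0 < x" "x < y"
  have "1/y < 1/x" using a by (simp add: field_simps)
  moreover have "ln x < ln y" using a by simp
  ultimately show ?thesis by simp
qed

lemma h_theta: "1/vartheta - 3 - 2*ln vartheta = 0"
proof -
  have t: "0 < vartheta" "1 - 3 * vartheta - 2 * vartheta * ln vartheta = 0" using theta_facts by auto
  have "1/vartheta - 3 - 2*ln vartheta = (1 - 3 * vartheta - 2 * vartheta * ln vartheta)/vartheta"
    using t(1) by (simp add: field_simps)
  then show ?thesis using t by simp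
qed

lemma g_pos: "0 < (x::real) \<Longrightarrow> x < vartheta \<Longrightarrow> 1 - 3*x - 2*x*ln x > 0"
proof -
  assume a: "0 < x" "x < vartheta"
  have "1/x - 3 - 2*ln x > 0" using h_mono[OF a] h_theta by simp
  then have "x * (1/x - 3 - 2*ln x) > 0" using a by simp
  then show ?thesis using a by (simp add: algebra_simps)
qed

lemma g_neg: "vartheta < (x::real) \<Longrightarrow> 1 - 3*x - 2*x*ln x < 0"
proof -
  assume a: "vartheta < x"
  have t: "0 < vartheta" using theta_facts by auto
  have "1/x - 3 - 2*ln x < 0" using h_mono[OF t a] h_theta by simp
  then have "x * (1/x - 3 - 2*ln x) < 0" using a t by (simp add: mult_pos_neg)
  then show ?thesis using a t by (simp add: algebra_simps)
qed

lemma F_deriv: "0 < (x::real) \<Longrightarrow> DERIV F x :> 2*(1 - 3*x - 2*x*ln x)"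
  unfolding F_def
  by (rule derivative_eq_intros refl | simp)+ (simp add: field_simps power2_eq_square)

lemma F_inc: "0 < a \<Longrightarrow> a < b \<Longrightarrow> b \<le> vartheta \<Longrightarrow> F a < F b"
proof -
  assume a: "0 < a" "a < b" "b \<le> vartheta"
  obtain z where z: "a < z" "z < b" "F b - F a = (b - a) * (2*(1 - 3*z - 2*z*ln z))"
    using MVT2[OF a(2), of F "\<lambda>x. 2*(1 - 3*x - 2*x*ln x)"] F_deriv a by auto
  have "1 - 3*z - 2*z*ln z > 0" using g_pos z a by simp
  then have "F b - F a > 0" unfolding z(3) using z by simp
  then show ?thesis by simp
qed

lemma F_dec: "vartheta \<le> a \<Longrightarrow> a < b \<Longrightarrow> F b < F a"
proof -
  assume a: "vartheta \<le> a" "a < b"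
  have t: "0 < vartheta" using theta_facts by auto
  obtain z where z: "a < z" "z < b" "F b - F a = (b - a) * (2*(1 - 3*z - 2*z*ln z))"
    using MVT2[OF a(2), of F "\<lambda>x. 2*(1 - 3*x - 2*x*ln x)"] F_deriv a t by auto
  have "1 - 3*z - 2*z*ln z < 0" using g_neg z a by simp
  then have "F b - F a < 0" unfolding z(3) using z by (simp add: mult_pos_neg)
  then show ?thesis by simp
qed

lemma F_le: "0 < x \<Longrightarrow> F x \<le> F vartheta"
  using F_inc[of x vartheta] F_dec[of vartheta x] by (cases x vartheta rule: linorder_cases) auto

lemma F_sep:
  assumes "0 < e" "e < vartheta" "0 < x" "\<bar>x - vartheta\<bar> \<ge> e"
  shows "F x \<le> max (F (vartheta - e)) (F (vartheta + e))"
proof (cases "x \<le> vartheta")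
  case True
  then have "x \<le> vartheta - e" using assms by linarith
  then have "F x \<le> F (vartheta - e)" using F_inc[of x "vartheta - e"] assms
    by (cases "x = vartheta - e") auto
  then show ?thesis by simp
next
  case False
  then have "x \<ge> vartheta + e" using assms by linarith
  then have "F x \<le> F (vartheta + e)" using F_dec[of "vartheta + e" x] assms
    by (cases "x = vartheta + e") auto
  then show ?thesis by simp
qed

lemma F_sep2: "0 < e \<Longrightarrow> e < vartheta \<Longrightarrow> max (F (vartheta - e)) (F (vartheta + e)) < F vartheta"
  using F_inc[of "vartheta - e" vartheta] F_dec[of vartheta "vartheta + e"] by auto




lemma step_lo: "1 \<le> (x::real) \<Longrightarrow> ln (x+1) - ln x \<le> 1/x"
proof -
  assume "1 \<le> x"
  have "ln ((x+1)/x) \<le> (x+1)/x - 1" by (rule ln_le_minus_one) (use \<open>1 \<le> x\<close> in simp)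
  then show ?thesis using \<open>1 \<le> x\<close> by (simp add: ln_div field_simps)
qed

lemma step_hi: "1 \<le> (x::real) \<Longrightarrow> 1/(x+1) \<le> ln (x+1) - ln x"
proof -
  assume "1 \<le> x"
  have "ln (x/(x+1)) \<le> x/(x+1) - 1" by (rule ln_le_minus_one) (use \<open>1 \<le> x\<close> in simp)
  moreover have "x/(x+1) - 1 = - 1/(x+1)" using \<open>1 \<le> x\<close> by (simp add: field_simps)
  ultimately show ?thesis using \<open>1 \<le> x\<close> by (simp add: ln_div)
qed

lemma harm_bounds:
  assumes "1 \<le> a" "a \<le> b"
  shows "ln (real b + 1) - ln (real a) \<le> (\<Sum>j=a..b. 1/real j) \<and>
         (\<Sum>j=a..b. 1/real j) \<le> 1/real a + ln (real b) - ln (real a)"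
  using assms(2)
proof (induction b rule: dec_induct)
  case base
  show ?case using step_lo[of "real a"] assms(1) by simp
next
  case (step n)
  have n1: "1 \<le> real n" using assms step by simp
  have s: "(\<Sum>j=a..Suc n. 1/real j) = (\<Sum>j=a..n. 1/real j) + 1/(real n + 1)"
    using step by (simp add: sum.cl_ivl_Suc add.commute)
  have eq: "real (Suc n) = real n + 1" by simp
  show ?case unfolding s eq using step.IH step_lo[of "real n + 1"] step_hi[OF n1] n1 by linarith
qed

lemma closed_form:
  assumes "2 \<le> r" "r \<le> m"
  shows "(\<Sum>k=r+1..m. (c + real k)/((real k - 1)*(real k - 2))) =
     (c+1)*(1/(real r - 1) - 1/(real m - 1)) + (\<Sum>j=r-1..m-2. 1/real j)"
  using assms(2)
proof (induction m rule: dec_induct)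
  case base
  have "{r-1..r-2} = {}" using assms by auto
  then show ?case by simp
next
  case (step m)
  have m2: "2 \<le> m" using assms step by simp
  have s1: "(\<Sum>k=r+1..Suc m. (c + real k)/((real k - 1)*(real k - 2))) =
     (\<Sum>k=r+1..m. (c + real k)/((real k - 1)*(real k - 2))) + (c + real m + 1)/(real m * (real m - 1))"
    using step by (simp add: sum.cl_ivl_Suc algebra_simps)
  have e: "Suc m - 2 = Suc (m - 2)" using m2 by simp
  have s2: "(\<Sum>j=r-1..Suc m-2. 1/real j) = (\<Sum>j=r-1..m-2. 1/real j) + 1/(real m - 1)"
    unfolding e using step m2 by (simp add: sum.cl_ivl_Suc of_nat_diff)
  have m1: "real m - 1 \<noteq> 0" "real m \<noteq> 0" using m2 by auto
  have key: "(c + real m + 1)/(real m * (real m - 1)) = (c+1)*(1/(real m - 1) - 1/real m) + 1/(real m - 1)"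
  proof -
    have 1: "1/(real m - 1) - 1/real m = 1/(real m*(real m-1))" using m1 by (simp add: divide_simps)
    have 2: "1/(real m - 1) = real m/(real m*(real m-1))" using m1 by simp
    show ?thesis unfolding 1 unfolding 2 by (simp add: add_divide_distrib[symmetric] algebra_simps)
  qed
  have eq: "real (Suc m) - 1 = real m" by simp
  show ?case unfolding s1 s2 step.IH key eq by (simp add: algebra_simps)
qed




lemma err_bound:
  assumes n3: "3 \<le> n" and r1: "1 < r" and rn: "r < n"
  shows "\<bar>EBWP n r - F (real r / real n)\<bar> \<le> 6 / real n"
proof -
  define R where "R = real r"
  define N where "N = real n"
  define S where "S = (\<Sum>j=r-1..n-2. 1/real j)"
  define L where "L = ln N - ln R"
  have R2: "2 \<le> R" using r1 unfolding R_def by simp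
  have RN: "R + 1 \<le> N" using rn unfolding R_def N_def by simp
  have N3: "3 \<le> N" using n3 unfolding N_def by simp
  have cf: "(\<Sum>k=r+1..n. (N + real k)/((real k - 1)*(real k - 2))) = (N+1)*(1/(R - 1) - 1/(N - 1)) + S"
    using closed_form[of r n N] r1 rn unfolding R_def S_def N_def by simp
  have E: "EBWP n r = 2*R*(R-1)/N^2 * ((N+1)*(1/(R - 1) - 1/(N - 1)) + S)"
    unfolding EBWP_def cf[unfolded N_def] by (simp add: R_def N_def)
  have hb: "ln (real (n-2) + 1) - ln (real (r-1)) \<le> S \<and> S \<le> 1/real (r-1) + ln (real (n-2)) - ln (real (r-1))"
    unfolding S_def using harm_bounds[of "r-1" "n-2"] r1 rn by simp
  have c1: "real (n-2) + 1 = N - 1" "real (r-1) = R - 1" using r1 rn n3 unfolding N_def R_def by (auto simp: of_nat_diff)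
  have c2: "ln (real (n-2)) \<le> ln (N - 1)" using n3 c1 by simp
  define A where "A = S - (ln (N-1) - ln (R-1))"
  have A: "0 \<le> A" "A \<le> 1/(R-1)" using hb c1 c2 unfolding A_def by auto
  define B1 where "B1 = ln R - ln (R-1)"
  define B2 where "B2 = ln N - ln (N-1)"
  have B1: "0 \<le> B1" "B1 \<le> 1/(R-1)" using step_lo[of "R-1"] R2 unfolding B1_def by auto
  have B2: "0 \<le> B2" "B2 \<le> 1/(N-1)" using step_lo[of "N-1"] N3 unfolding B2_def by auto
  have L: "0 \<le> L" "R * L \<le> N - R"
  proof -
    show "0 \<le> L" unfolding L_def using R2 RN by simp
    have "ln (N/R) \<le> N/R - 1" by (rule ln_le_minus_one) (use R2 RN in simp)
    then have "L \<le> N/R - 1" unfolding L_def using R2 RN by (simp add: ln_div)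
    then have "R * L \<le> R * (N/R - 1)" using R2 by (simp add: mult_left_mono)
    then show "R * L \<le> N - R" using R2 by (simp add: algebra_simps)
  qed
  have SS: "S = A + L + B1 - B2" unfolding A_def L_def B1_def B2_def by simp
  have RR: "0 \<le> R*(R-1)" using R2 by simp
  have pA: "0 \<le> R*(R-1)*A" "R*(R-1)*A \<le> R"
  proof -
    show "0 \<le> R*(R-1)*A" using RR A by simp
    have "R*(R-1)*A \<le> R*(R-1)*(1/(R-1))" by (rule mult_left_mono[OF A(2) RR])
    then show "R*(R-1)*A \<le> R" using R2 by simp
  qed
  have pB1: "0 \<le> R*(R-1)*B1" "R*(R-1)*B1 \<le> R"
  proof -
    show "0 \<le> R*(R-1)*B1" using RR B1 by simp
    have "R*(R-1)*B1 \<le> R*(R-1)*(1/(R-1))" by (rule mult_left_mono[OF B1(2) RR])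
    then show "R*(R-1)*B1 \<le> R" using R2 by simp
  qed
  have pB2: "0 \<le> R*(R-1)*B2" "R*(R-1)*B2 \<le> R"
  proof -
    show "0 \<le> R*(R-1)*B2" using RR B2 by simp
    have "R*(R-1)*B2 \<le> R*(R-1)*(1/(N-1))" by (rule mult_left_mono[OF B2(2) RR])
    also have "\<dots> = R * ((R-1)/(N-1))" by simp
    also have "\<dots> \<le> R * 1" using R2 RN by (intro mult_left_mono) auto
    finally show "R*(R-1)*B2 \<le> R" by simp
  qed
  have pL: "0 \<le> R*L" using L R2 by simp
  define X where "X = R*(R-1)*S - R^2*L"
  have X: "X = R*(R-1)*A + R*(R-1)*B1 - R*(R-1)*B2 - R*L"
    unfolding X_def SS by (simp add: algebra_simps power2_eq_square)
  have Xb: "\<bar>X\<bar> \<le> 2*N" unfolding X using pA pB1 pB2 pL L RN R2 by linarith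
  define T where "T = 4*R*(N-R)/(N^2*(N-1))"
  have T0: "0 \<le> T" unfolding T_def using RN N3 R2 by simp
  have T1: "T \<le> 2/N"
  proof -
    have "4*R*(N-R) \<le> N^2" using sum_squares_ge_zero[of "N - 2*R" 0]
      by (simp add: power2_eq_square algebra_simps)
    then have "T \<le> N^2/(N^2*(N-1))" unfolding T_def using N3 by (intro divide_right_mono) auto
    also have "\<dots> = 1/(N-1)" using N3 by simp
    also have "\<dots> \<le> 2/N" using N3 by (simp add: field_simps)
    finally show ?thesis .
  qed
  have Fx: "F (R/N) = 2*R*(N-R)/N^2 + 2*R^2*L/N^2"
    unfolding F_def L_def using R2 RN by (simp add: ln_div field_simps power2_eq_square)
  have E2: "EBWP n r = 2*R*(N+1)*(N-R)/(N^2*(N-1)) + 2*R*(R-1)*S/N^2"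
  proof -
    have nz: "R - 1 \<noteq> 0" "N - 1 \<noteq> 0" "N \<noteq> 0" using R2 N3 by auto
    have "1/(R - 1) - 1/(N - 1) = (N - R)/((R-1)*(N-1))" using nz by (simp add: divide_simps)
    then have "2*R*(R-1)/N^2 * ((N+1)*(1/(R - 1) - 1/(N - 1))) = 2*R*(N+1)*(N-R)/(N^2*(N-1))"
      using nz by simp
    then show ?thesis unfolding E by (simp add: distrib_left)
  qed
  have D: "EBWP n r - F (R/N) = T + 2*X/N^2"
    unfolding E2 Fx T_def X_def using R2 RN N3 by (simp add: field_simps power2_eq_square)
  have "\<bar>2*X/N^2\<bar> \<le> 2*(2*N)/N^2" using Xb N3 by (simp add: abs_div divide_right_mono)
  also have "\<dots> = 4/N" using N3 by (simp add: power2_eq_square)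
  finally have "\<bar>2*X/N^2\<bar> \<le> 4/N" .
  then have "\<bar>EBWP n r - F (R/N)\<bar> \<le> 6/N" unfolding D using T0 T1 by linarith
  then show ?thesis unfolding R_def N_def .
qed




theorem theorem4:
  fixes M :: "nat \<Rightarrow> nat"
  assumes M_max: "\<And>n. n \<ge> 3 \<Longrightarrow> 1 < M n \<and> M n < n \<and>
                     (\<forall>r. 1 < r \<and> r < n \<longrightarrow> EBWP n r \<le> EBWP n (M n))"
  shows "1 - 3 * vartheta - 2 * vartheta * ln vartheta = 0
     \<and> (\<lambda>n. real (M n) / real n) \<longlonglongrightarrow> vartheta
     \<and> (\<lambda>n. EBWP n (M n)) \<longlonglongrightarrow> vartheta * (1 + vartheta)
     \<and> (\<lambda>n. EBWP n (nat \<lfloor>real n * vartheta\<rfloor>)) \<longlonglongrightarrow> vartheta * (1 + vartheta)"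
proof -
  define \<theta> where "\<theta> = vartheta"
  have th: "0 < \<theta>" "\<theta> < 1" "1 - 3 * \<theta> - 2 * \<theta> * ln \<theta> = 0" using theta_facts unfolding \<theta>_def by auto
  define r0 where "r0 n = nat \<lfloor>real n * \<theta>\<rfloor>" for n
  have Fth: "F \<theta> = \<theta> * (1 + \<theta>)"
  proof -
    have a: "2*\<theta>^2*ln \<theta> = \<theta>*(2*\<theta>*ln \<theta>)" by (simp add: power2_eq_square)
    have b: "2*\<theta>*ln \<theta> = 1 - 3*\<theta>" using th(3) by simp
    have "2*\<theta>^2*ln \<theta> = \<theta>*(1 - 3*\<theta>)" unfolding a b ..
    then show ?thesis unfolding F_def by (simp add: algebra_simps power2_eq_square)
  qed
  have r0eq: "real (r0 n) = of_int \<lfloor>real n * \<theta>\<rfloor>" for n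
    unfolding r0_def using th by simp
  have r0b: "real n * \<theta> - 1 < real (r0 n)" "real (r0 n) \<le> real n * \<theta>" for n
    unfolding r0eq by linarith+
  define K where "K = nat \<lceil>2/\<theta>\<rceil> + 3"
  have good: "3 \<le> n \<and> 1 < r0 n \<and> r0 n < n" if "K \<le> n" for n
  proof -
    have "real n \<ge> 2/\<theta> + 3" using that unfolding K_def by linarith
    then have "real n * \<theta> \<ge> (2/\<theta> + 3) * \<theta>" using th by (intro mult_right_mono) auto
    then have "real n * \<theta> \<ge> 2 + 3*\<theta>" using th by (simp add: algebra_simps)
    then have "real (r0 n) > 1" using r0b[of n] th by linarith
    moreover have "real (r0 n) < real n"
    proof -
      have "0 < real n" using that unfolding K_def by simp
      then have "real n * \<theta> < real n * 1" using th by (intro mult_strict_left_mono) auto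
      then show ?thesis using r0b[of n] by simp
    qed
    ultimately show ?thesis using that unfolding K_def by auto
  qed
  have evgood: "eventually (\<lambda>n. 3 \<le> n \<and> 1 < r0 n \<and> r0 n < n) sequentially"
    using eventually_ge_at_top[of K] by eventually_elim (rule good)
  have lim6: "(\<lambda>n. 6 / real n) \<longlonglongrightarrow> 0" by (rule lim_const_over_n)
  have r0lim: "(\<lambda>n. real (r0 n) / real n) \<longlonglongrightarrow> \<theta>"
  proof (rule tendsto_sandwich)
    show "eventually (\<lambda>n. \<theta> - 1/real n \<le> real (r0 n) / real n) sequentially"
      using eventually_ge_at_top[of 1]
    proof eventually_elim
      case (elim n)
      then have "real n * \<theta> - 1 \<le> real (r0 n)" using r0b[of n] by linarith
      then have "(real n * \<theta> - 1)/real n \<le> real (r0 n) / real n" using elim by (intro divide_right_mono) auto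
      then show ?case using elim by (simp add: diff_divide_distrib)
    qed
    show "eventually (\<lambda>n. real (r0 n) / real n \<le> \<theta>) sequentially"
      using eventually_ge_at_top[of 1]
    proof eventually_elim
      case (elim n)
      then have "real (r0 n) / real n \<le> (real n * \<theta>)/real n" using r0b[of n] by (intro divide_right_mono) auto
      then show ?case using elim by simp
    qed
    show "(\<lambda>n. \<theta> - 1/real n) \<longlonglongrightarrow> \<theta>"
      using tendsto_diff[OF tendsto_const lim_const_over_n[of 1]] by simp
    show "(\<lambda>n. \<theta>) \<longlonglongrightarrow> \<theta>" by simp
  qed
  have contF: "isCont F \<theta>" unfolding F_def using th by (auto intro!: continuous_intros)
  have Fr0: "(\<lambda>n. F (real (r0 n) / real n)) \<longlonglongrightarrow> F \<theta>"
    by (rule isCont_tendsto_compose[OF contF r0lim])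
  have alim: "(\<lambda>n. EBWP n (r0 n)) \<longlonglongrightarrow> F \<theta>"
  proof (rule tendsto_sandwich)
    show "eventually (\<lambda>n. F (real (r0 n) / real n) - 6/real n \<le> EBWP n (r0 n)) sequentially"
      using evgood
    proof eventually_elim
      case (elim n)
      then show ?case using err_bound[of n "r0 n"] by linarith
    qed
    show "eventually (\<lambda>n. EBWP n (r0 n) \<le> F (real (r0 n) / real n) + 6/real n) sequentially"
      using evgood
    proof eventually_elim
      case (elim n)
      then show ?case using err_bound[of n "r0 n"] by linarith
    qed
    show "(\<lambda>n. F (real (r0 n) / real n) - 6/real n) \<longlonglongrightarrow> F \<theta>"
      using tendsto_diff[OF Fr0 lim6] by simp
    show "(\<lambda>n. F (real (r0 n) / real n) + 6/real n) \<longlonglongrightarrow> F \<theta>"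
      using tendsto_add[OF Fr0 lim6] by simp
  qed
  have Mle: "EBWP n (M n) \<le> F \<theta> + 6/real n" if "3 \<le> n" for n
  proof -
    have m: "1 < M n" "M n < n" using M_max[OF that] by auto
    have "EBWP n (M n) \<le> F (real (M n) / real n) + 6/real n" using err_bound[OF that m] by linarith
    moreover have "F (real (M n) / real n) \<le> F \<theta>" using F_le[of "real (M n) / real n"] m unfolding \<theta>_def by simp
    ultimately show ?thesis by linarith
  qed
  have blim: "(\<lambda>n. EBWP n (M n)) \<longlonglongrightarrow> F \<theta>"
  proof (rule tendsto_sandwich)
    show "eventually (\<lambda>n. EBWP n (r0 n) \<le> EBWP n (M n)) sequentially"
      using evgood
    proof eventually_elim
      case (elim n)
      then show ?case using M_max[of n] by blast
    qed
    show "eventually (\<lambda>n. EBWP n (M n) \<le> F \<theta> + 6/real n) sequentially"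
      using eventually_ge_at_top[of 3] by eventually_elim (rule Mle)
    show "(\<lambda>n. F \<theta> + 6/real n) \<longlonglongrightarrow> F \<theta>"
      using tendsto_add[OF tendsto_const lim6] by simp
  qed (rule alim)
  have xlim: "(\<lambda>n. real (M n) / real n) \<longlonglongrightarrow> \<theta>"
    unfolding tendsto_iff
  proof (intro allI impI)
    fix e :: real assume e: "0 < e"
    define e' where "e' = min e (\<theta>/2)"
    have e': "0 < e'" "e' < \<theta>" "e' \<le> e" unfolding e'_def using e th by auto
    define m where "m = max (F (\<theta> - e')) (F (\<theta> + e'))"
    have m: "m < F \<theta>" unfolding m_def \<theta>_def using F_sep2[of e'] e' unfolding \<theta>_def by simp
    have "(\<lambda>n. EBWP n (M n) - 6/real n) \<longlonglongrightarrow> F \<theta>"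
      using tendsto_diff[OF blim lim6] by simp
    then have ev: "eventually (\<lambda>n. m < EBWP n (M n) - 6/real n) sequentially"
      using m by (rule order_tendstoD)
    show "eventually (\<lambda>n. dist (real (M n) / real n) \<theta> < e) sequentially"
      using ev eventually_ge_at_top[of 3]
    proof eventually_elim
      case (elim n)
      have mm: "1 < M n" "M n < n" using M_max[OF elim(2)] by auto
      have pos: "0 < real (M n) / real n" using mm by simp
      have "EBWP n (M n) - 6/real n \<le> F (real (M n) / real n)" using err_bound[OF elim(2) mm] by linarith
      then have Fb: "m < F (real (M n) / real n)" using elim(1) by linarith
      have "\<bar>real (M n) / real n - \<theta>\<bar> < e'"
      proof (rule ccontr)
        assume "\<not> ?thesis"
        then have "F (real (M n) / real n) \<le> m"
          using F_sep[of e' "real (M n) / real n"] e' pos unfolding m_def \<theta>_def by simp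
        with Fb show False by simp
      qed
      then show ?case using e' by (simp add: dist_real_def)
    qed
  qed
  show ?thesis using th(3) xlim blim alim Fth unfolding \<theta>_def r0_def by simp
qed


end
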